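(* In a black-white array (BWA) maintained by Insert and Delete operations, consider a demote operation of a segment of rank $i$. Its outcome is one of the following two. (1) If the segment of rank $i-1$ was inactive, the result is a new active segment of rank $i-1$ with occupancy rate $100\%$. (2) If the segment of rank $i-1$ was active, the result, after the merge with the segment of rank $i-1$, is a new segment of rank $i$ with occupancy rate strictly greater than $75\%$.
   Context: A black-white array (BWA) of size $N=2^K$ stores values from a totally ordered set. It has a white array $W[1..N-1]$ and a black array $B[1..N/2-1]$. For $i\ge0$, the segment of rank $i$ is the block of indices $[2^i,2^{i+1}-1]$, of size $2^i$. A state variable $\mathtt{total}$ counts stored entries, including VOID entries. The segment of rank $i$ is active iff bit $i$ of $\mathtt{total}$ is $1$. Between operations, the stored values are in the active white segments, each sorted. Insert$(v)$: if rank 0 is inactive, set $W[1]=v$; otherwise set $B[1]=v$ and perform $\mathrm{merge}(0)$. $\mathrm{merge}(i)$: merge the white and black segments of rank $i$. The sorted result goes into the white rank-$(i+1)$ segment if that segment is inactive. Otherwise it goes into the black rank-$(i+1)$ segment, followed by $\mathrm{merge}(i+1)$. An occupancy vector $V$ records, for each rank $i$, the number $V[i]$ of non-VOID values in the white segment of rank $i$. The occupancy rate of a segment is the number of its non-VOID values divided by its size. Delete$(v)$: search for $v$. If it is found at an index in the white segment of rank $i$, replace that entry by a special value VOID and decrement $V[i]$. If now $V[i]\le 2^{i-1}$ (half the segment size), perform demote$(i)$. Demote$(i)$: copy all non-VOID values of the white rank-$i$ segment into the rank-$(i-1)$ segment. They go to the white array if rank $i-1$ is inactive. If rank $i-1$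 is active, they go to the black array, followed by a merge of the black and white rank-$(i-1)$ segments into the white segment of rank $i$. The state variables are updated accordingly. *)

theory Defs
  imports Main "HOL.Real"
begin

text \<open>Entries of the arrays. A stored value is \<open>Val x\<close>; a deleted value is
  marked VOID but keeps its key (\<open>Void x\<close>) so that segments stay sorted by key.\<close>
datatype 'a entry = Val 'a | Void 'a

fun key :: "'a entry \<Rightarrow> 'a" where
  "key (Val x) = x" | "key (Void x) = x"

fun is_void :: "'a entry \<Rightarrow> bool" where
  "is_void (Val _) = False" | "is_void (Void _) = True"

text \<open>State of a BWA: total, white array W, black array B, occupancy vector V.\<close>
record 'a bwa =
  tot :: nat
  Wa  :: "nat \<Rightarrow> 'a entry"
  Ba  :: "nat \<Rightarrow> 'a entry"
  Vo  :: "nat \<Rightarrow> nat"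

definition seg :: "nat \<Rightarrow> nat set" where
  "seg i = {2^i ..< 2^(Suc i)}"

definition active :: "('a, 'b) bwa_scheme \<Rightarrow> nat \<Rightarrow> bool" where
  "active s i \<longleftrightarrow> odd (tot s div 2^i)"

definition seg_list :: "(nat \<Rightarrow> 'a entry) \<Rightarrow> nat \<Rightarrow> 'a entry list" where
  "seg_list f i = map f [2^i ..< 2^(Suc i)]"

definition write_seg :: "(nat \<Rightarrow> 'a entry) \<Rightarrow> nat \<Rightarrow> 'a entry list \<Rightarrow> nat \<Rightarrow> 'a entry" where
  "write_seg f i xs = (\<lambda>p. if 2^i \<le> p \<and> p < 2^i + length xs then xs ! (p - 2^i) else f p)"

definition merge_lists :: "'a::linorder entry list \<Rightarrow> 'a entry list \<Rightarrow> 'a entry list" where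
  "merge_lists xs ys = sort_key key (xs @ ys)"

definition nvoid :: "'a entry list \<Rightarrow> nat" where
  "nvoid xs = length (filter (\<lambda>e. \<not> is_void e) xs)"

text \<open>merge(i), with a fuel argument bounding the cascade (fuel K suffices for size 2^K).\<close>
primrec merge_op :: "nat \<Rightarrow> nat \<Rightarrow> 'a::linorder bwa \<Rightarrow> 'a bwa" where
  "merge_op 0 i s = s"
| "merge_op (Suc n) i s =
     (let xs = merge_lists (seg_list (Wa s) i) (seg_list (Ba s) i) in
      if \<not> active s (Suc i)
      then s\<lparr>Wa := write_seg (Wa s) (Suc i) xs, Vo := ((Vo s)(i := 0))(Suc i := nvoid xs)\<rparr>
      else merge_op n (Suc i) (s\<lparr>Ba := write_seg (Ba s) (Suc i) xs, Vo := (Vo s)(i := 0)\<rparr>))"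

definition insert_op :: "nat \<Rightarrow> 'a::linorder \<Rightarrow> 'a bwa \<Rightarrow> 'a bwa" where
  "insert_op K v s =
     (if \<not> active s 0
      then s\<lparr>Wa := (Wa s)(1 := Val v), Vo := (Vo s)(0 := 1)\<rparr>
      else merge_op K 0 (s\<lparr>Ba := (Ba s)(1 := Val v)\<rparr>))\<lparr>tot := tot s + 1\<rparr>"

definition void_at :: "'a bwa \<Rightarrow> nat \<Rightarrow> nat \<Rightarrow> 'a bwa" where
  "void_at s p i = s\<lparr>Wa := (Wa s)(p := Void (key (Wa s p))), Vo := (Vo s)(i := Vo s i - 1)\<rparr>"

text \<open>demote(i). For i = 0 there is no rank -1: the (now empty) rank-0 segment is
  simply deactivated.\<close>
definition demote :: "nat \<Rightarrow> 'a::linorder bwa \<Rightarrow> 'a bwa" where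
  "demote i s =
    (if i = 0 then s\<lparr>tot := tot s - 1, Vo := (Vo s)(0 := 0)\<rparr>
     else
      (let ys = filter (\<lambda>e. \<not> is_void e) (seg_list (Wa s) i) in
       if \<not> active s (i - 1)
       then s\<lparr>Wa := write_seg (Wa s) (i - 1) ys,
              Vo := ((Vo s)(i := 0))(i - 1 := length ys),
              tot := tot s - 2^i + 2^(i - 1)\<rparr>
       else
         (let B' = write_seg (Ba s) (i - 1) ys;
              xs = merge_lists (seg_list (Wa s) (i - 1)) (seg_list B' (i - 1)) in
          s\<lparr>Ba := B', Wa := write_seg (Wa s) i xs,
            Vo := ((Vo s)(i - 1 := 0))(i := nvoid xs),
            tot := tot s - 2^(i - 1)\<rparr>)))"

text \<open>Delete(v): if v is found at index p of an active white segment of rank i,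
  void it and demote if V[i] \<le> 2^(i-1) (written 2 V[i] \<le> 2^i); otherwise no change.\<close>
definition delete_at :: "'a::linorder bwa \<Rightarrow> nat \<Rightarrow> nat \<Rightarrow> 'a bwa" where
  "delete_at s p i = (let s1 = void_at s p i in
                        if 2 * Vo s1 i \<le> 2^i then demote i s1 else s1)"

definition delete_step :: "nat \<Rightarrow> 'a::linorder bwa \<Rightarrow> 'a \<Rightarrow> 'a bwa \<Rightarrow> bool" where
  "delete_step K s v s' \<longleftrightarrow>
     (\<exists>i p. i < K \<and> active s i \<and> p \<in> seg i \<and> Wa s p = Val v \<and> s' = delete_at s p i)
   \<or> ((\<nexists>i p. i < K \<and> active s i \<and> p \<in> seg i \<and> Wa s p = Val v) \<and> s' = s)"

inductive reachable :: "nat \<Rightarrow> 'a::linorder bwa \<Rightarrow> bool" for K where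
  init: "reachable K \<lparr>tot = 0, Wa = W, Ba = B, Vo = (\<lambda>_. 0)\<rparr>"
| ins:  "reachable K s \<Longrightarrow> tot s + 1 < 2^K \<Longrightarrow> reachable K (insert_op K v s)"
| del:  "reachable K s \<Longrightarrow> delete_step K s v s' \<Longrightarrow> reachable K s'"

definition occ_rate :: "'a bwa \<Rightarrow> nat \<Rightarrow> real" where
  "occ_rate s i = real (card {p \<in> seg i. \<not> is_void (Wa s p)}) / 2^i"

end

theory Submission
  imports Defs
begin

lemma set_bit_nat:
  fixes t :: nat
  assumes "even (t div 2^i)"
  shows "odd ((t + 2^i) div 2^k) \<longleftrightarrow> (k = i \<or> odd (t div 2^k))"
proof -
  have "t + 2^i = set_bit i t" using assms by (simp add: set_bit_eq bit_iff_odd)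
  then show ?thesis using bit_set_bit_iff[of i t k] by (auto simp: bit_iff_odd)
qed

lemma ge_if_odd: fixes t :: nat assumes "odd (t div 2^i)" shows "2^i \<le> t"
  using assms by (metis div_less le_less_linear odd_pos less_numeral_extra(3))

lemma clear_bit_nat:
  fixes t :: nat
  assumes "odd (t div 2^i)"
  shows "odd ((t - 2^i) div 2^k) \<longleftrightarrow> (k \<noteq> i \<and> odd (t div 2^k))"
proof -
  define u where "u = t - 2^i"
  have t: "t = u + 2^i" using assms ge_if_odd[OF assms] u_def by simp
  have "t div 2^i = u div 2^i + 1" using t by simp
  then have ev: "even (u div 2^i)" using assms by simp
  show ?thesis using set_bit_nat[OF ev, of k] t ev unfolding u_def[symmetric] by auto
qed

lemma succ_bits:
  fixes t :: nat
  assumes "\<forall>k<j. odd (t div 2^k)" "even (t div 2^j)"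
  shows "odd ((t+1) div 2^k) \<longleftrightarrow> (k = j \<or> (j < k \<and> odd (t div 2^k)))"
  using assms
proof (induction j arbitrary: t k)
  case 0
  then have ev: "even t" by simp
  show ?case
  proof (cases k)
    case 0 then show ?thesis using ev by simp
  next
    case (Suc k')
    have "(t+1) div 2 = t div 2" using ev by presburger
    then have "(t+1) div 2^k = t div 2^k" using Suc by (simp add: div_mult2_eq)
    then show ?thesis using Suc by simp
  qed
next
  case (Suc j)
  then have "odd t" by (metis div_by_1 power_0 zero_less_Suc)
  then obtain u where u: "t = 2*u+1" by (metis oddE)
  have A: "\<forall>k<j. odd (u div 2^k)"
  proof (intro allI impI)
    fix k assume "k < j"
    then have "odd (t div 2^Suc k)" using Suc.prems by auto
    then show "odd (u div 2^k)" using u by (simp add: div_mult2_eq)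
  qed
  have B: "even (u div 2^j)" using Suc.prems(2) u by (simp add: div_mult2_eq)
  show ?case
  proof (cases k)
    case 0 then show ?thesis using u by simp
  next
    case (Suc k')
    have "(t+1) div 2^k = (u+1) div 2^k'" using u Suc by (simp add: div_mult2_eq)
    moreover have "t div 2^k = u div 2^k'" using u Suc by (simp add: div_mult2_eq)
    ultimately show ?thesis using Suc.IH[OF A B, of k'] Suc by auto
  qed
qed

lemma len_seg_list[simp]: "length (seg_list f i) = 2^i"
  by (simp add: seg_list_def)

lemma seg_write_same:
  assumes "length xs = 2^i"
  shows "seg_list (write_seg f i xs) i = xs"
  by (rule nth_equalityI) (auto simp: seg_list_def write_seg_def assms)

lemma pow_sep: "k < (i::nat) \<Longrightarrow> (2::nat)^(Suc k) \<le> 2^i"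
  by (rule power_increasing) auto

lemma seg_disj:
  assumes "2^k \<le> (q::nat)" "q < 2^Suc k" "2^i \<le> q" "q < 2^Suc i"
  shows "k = i"
proof (rule ccontr)
  assume "k \<noteq> i"
  then consider "k < i" | "i < k" by linarith
  then show False
  proof cases
    case 1 then have "(2::nat)^Suc k \<le> 2^i" by (rule pow_sep)
    then show False using assms by linarith
  next
    case 2 then have "(2::nat)^Suc i \<le> 2^k" by (rule pow_sep)
    then show False using assms by linarith
  qed
qed

lemma seg_write_other:
  assumes "k \<noteq> i" "length xs \<le> 2^i"
  shows "seg_list (write_seg f i xs) k = seg_list f k"
  unfolding seg_list_def
proof (intro map_cong refl)
  fix q assume "q \<in> set [2^k..<2^Suc k]"
  then have q: "2^k \<le> q" "q < 2^Suc k" by auto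
  have nq: "\<not> (2^i \<le> q \<and> q < 2^i + length xs)"
  proof
    assume "2^i \<le> q \<and> q < 2^i + length xs"
    then have "2^i \<le> q" "q < 2^Suc i" using assms(2) by auto
    then show False using seg_disj[OF q] assms(1) by blast
  qed
  show "write_seg f i xs q = f q" unfolding write_seg_def by (rule if_not_P[OF nq])
qed

lemma seg_upd_other:
  assumes "p \<in> seg i" "k \<noteq> i"
  shows "seg_list (f(p := x)) k = seg_list f k"
  unfolding seg_list_def
proof (intro map_cong refl)
  fix q assume "q \<in> set [2^k..<2^Suc k]"
  then have q: "2^k \<le> q" "q < 2^Suc k" by auto
  have "2^i \<le> p" "p < 2^Suc i" using assms(1) by (auto simp: seg_def)
  then have "q \<noteq> p" using seg_disj[OF q] assms(2) by blast
  then show "(f(p := x)) q = f q" by simp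
qed

lemma nvoid_card: "nvoid (seg_list f i) = card {q \<in> seg i. \<not> is_void (f q)}"
proof -
  have "nvoid (seg_list f i) = length (filter (\<lambda>q. \<not> is_void (f q)) [2^i..<2^Suc i])"
    by (simp add: nvoid_def seg_list_def filter_map comp_def)
  also have "\<dots> = card ({q. \<not> is_void (f q)} \<inter> set [2^i..<2^Suc i])"
    by (rule distinct_length_filter) simp
  also have "\<dots> = card {q \<in> seg i. \<not> is_void (f q)}"
    by (rule arg_cong[where f=card]) (auto simp: seg_def)
  finally show ?thesis .
qed

lemma nvoid_void:
  assumes "p \<in> seg i" "f p = Val v"
  shows "nvoid (seg_list (f(p := Void w)) i) = nvoid (seg_list f i) - 1"
proof -
  define A where "A = {q \<in> seg i. \<not> is_void (f q)}"
  have e: "{q \<in> seg i. \<not> is_void ((f(p := Void w)) q)} = A - {p}"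
    unfolding A_def by auto
  have "p \<in> A" using assms unfolding A_def by auto
  then have "card (A - {p}) = card A - 1" by (rule card_Diff_singleton)
  then show ?thesis unfolding nvoid_card e A_def .
qed

lemma nvoid_merge: "nvoid (merge_lists xs ys) = nvoid xs + nvoid ys"
  by (simp add: merge_lists_def nvoid_def filter_sort)

lemma length_merge[simp]: "length (merge_lists xs ys) = length xs + length ys"
  by (simp add: merge_lists_def)

lemma nvoid_filter: "nvoid (filter (\<lambda>e. \<not> is_void e) xs) = length (filter (\<lambda>e. \<not> is_void e) xs)"
  by (simp add: nvoid_def)

lemma nvoid_le: "nvoid xs \<le> length xs"
  by (simp add: nvoid_def)

lemma merge_tot: "tot (merge_op n i s) = tot s"
  by (induction n arbitrary: i s) (auto simp: Let_def)

lemma occ_nvoid: "occ_rate s i = real (nvoid (seg_list (Wa s) i)) / 2^i"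
  by (simp add: occ_rate_def nvoid_card)


definition good :: "'a bwa \<Rightarrow> nat \<Rightarrow> bool" where
  "good s k \<longleftrightarrow> Vo s k = nvoid (seg_list (Wa s) k) \<and> 2^k < 2 * Vo s k"

definition bwa_inv :: "nat \<Rightarrow> 'a bwa \<Rightarrow> bool" where
  "bwa_inv K s \<longleftrightarrow> tot s < 2^K \<and> (\<forall>k. active s k \<longrightarrow> good s k)"

lemma merge_ok:
  fixes s :: "'a::linorder bwa"
  assumes "\<forall>k\<ge>i. active s k \<longrightarrow> good s k" "active s i"
    "2^i < 2 * nvoid (seg_list (Ba s) i)"
    "i < j0" "j0 \<le> i + n" "\<not> active s j0"
  shows "\<exists>j>i. \<not> active s j \<and> (\<forall>k. i \<le> k \<and> k < j \<longrightarrow> active s k)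
     \<and> (\<forall>k>j. Vo (merge_op n i s) k = Vo s k \<and> seg_list (Wa (merge_op n i s)) k = seg_list (Wa s) k)
     \<and> good (merge_op n i s) j"
  using assms
proof (induction n arbitrary: i s j0)
  case 0 then show ?case by simp
next
  case (Suc n)
  define xs where "xs = merge_lists (seg_list (Wa s) i) (seg_list (Ba s) i)"
  have gi: "good s i" using Suc.prems by auto
  have lx: "length xs = 2^Suc i" by (simp add: xs_def)
  have nx: "nvoid xs = Vo s i + nvoid (seg_list (Ba s) i)"
    using gi by (simp add: xs_def nvoid_merge good_def)
  have big: "2^Suc i < 2 * nvoid xs" using nx gi Suc.prems(3) by (simp add: good_def)
  show ?case
  proof (cases "active s (Suc i)")
    case False
    define s' where "s' = s\<lparr>Wa := write_seg (Wa s) (Suc i) xs, Vo := ((Vo s)(i := 0))(Suc i := nvoid xs)\<rparr>"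
    have m: "merge_op (Suc n) i s = s'"
      using False by (simp add: xs_def Let_def s'_def)
    have "\<forall>k>Suc i. Vo s' k = Vo s k \<and> seg_list (Wa s') k = seg_list (Wa s) k"
      using seg_write_other[of _ "Suc i" xs "Wa s"] lx by (simp add: s'_def)
    moreover have "good s' (Suc i)"
      using seg_write_same[OF lx] big by (simp add: s'_def good_def)
    moreover have "\<forall>k. i \<le> k \<and> k < Suc i \<longrightarrow> active s k" using Suc.prems(2)
      by (auto simp: le_less_Suc_eq)
    ultimately show ?thesis unfolding m using False by blast
  next
    case True
    define s1 where "s1 = s\<lparr>Ba := write_seg (Ba s) (Suc i) xs, Vo := (Vo s)(i := 0)\<rparr>"
    have m: "merge_op (Suc n) i s = merge_op n (Suc i) s1"
      using True by (simp add: xs_def s1_def Let_def)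
    have act: "\<And>k. active s1 k = active s k" by (simp add: s1_def active_def)
    have gs1: "\<And>k. k \<noteq> i \<Longrightarrow> good s1 k = good s k" by (simp add: s1_def good_def)
    have p1: "\<forall>k\<ge>Suc i. active s1 k \<longrightarrow> good s1 k" using Suc.prems(1) act gs1 by auto
    have p2: "active s1 (Suc i)" using True act by simp
    have p3: "2^Suc i < 2 * nvoid (seg_list (Ba s1) (Suc i))"
      using seg_write_same[OF lx] big by (simp add: s1_def)
    have p4: "Suc i < j0" using Suc.prems(4,6) True by (metis Suc_lessI)
    have p5: "j0 \<le> Suc i + n" using Suc.prems(5) by simp
    have p6: "\<not> active s1 j0" using Suc.prems(6) act by simp
    obtain j where j: "Suc i < j" "\<not> active s1 j" "\<forall>k. Suc i \<le> k \<and> k < j \<longrightarrow> active s1 k"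
      "\<forall>k>j. Vo (merge_op n (Suc i) s1) k = Vo s1 k \<and> seg_list (Wa (merge_op n (Suc i) s1)) k = seg_list (Wa s1) k"
      "good (merge_op n (Suc i) s1) j"
      using Suc.IH[OF p1 p2 p3 p4 p5 p6] by blast
    have "\<forall>k. i \<le> k \<and> k < j \<longrightarrow> active s k"
    proof (intro allI impI)
      fix k assume "i \<le> k \<and> k < j"
      then show "active s k" using Suc.prems(2) j(3) act
        by (cases "k = i") auto
    qed
    moreover have "\<forall>k>j. Vo (merge_op n (Suc i) s1) k = Vo s k \<and> seg_list (Wa (merge_op n (Suc i) s1)) k = seg_list (Wa s) k"
      using j(1,4) by (simp add: s1_def)
    ultimately show ?thesis unfolding m using j act by (metis Suc_lessD)
  qed
qed


lemma good_tot[simp]: "good (s\<lparr>tot := t\<rparr>) k = good s k"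
  by (simp add: good_def)

lemma ins_inv:
  fixes s :: "'a::linorder bwa"
  assumes inv: "bwa_inv K s" and lt: "tot s + 1 < 2^K"
  shows "bwa_inv K (insert_op K v s)"
proof (cases "active s 0")
  case False
  define s' where "s' = s\<lparr>Wa := (Wa s)(1 := Val v), Vo := (Vo s)(0 := 1), tot := tot s + 1\<rparr>"
  have e: "insert_op K v s = s'" using False by (simp add: insert_op_def s'_def)
  have ev: "even (tot s div 2^0)" using False by (simp add: active_def)
  have act: "\<And>k. active s' k \<longleftrightarrow> k = 0 \<or> active s k"
    using set_bit_nat[OF ev] by (simp add: s'_def active_def)
  have one: "(1::nat) \<in> seg 0" by (simp add: seg_def)
  have "good s' k" if actk: "active s' k" for k
  proof (cases "k = 0")
    case True
    have "seg_list (Wa s') 0 = [Val v]" by (simp add: s'_def seg_list_def numeral_2_eq_2)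
    then show ?thesis using True by (simp add: good_def s'_def nvoid_def)
  next
    case False
    then have "good s k" using inv that act by (auto simp: bwa_inv_def)
    have "seg_list ((Wa s)(1 := Val v)) k = seg_list (Wa s) k" by (rule seg_upd_other[OF one False])
    then have "seg_list (Wa s') k = seg_list (Wa s) k" "Vo s' k = Vo s k" using False by (simp_all add: s'_def)
    then show ?thesis using \<open>good s k\<close> by (simp add: good_def)
  qed
  then show ?thesis using lt unfolding e bwa_inv_def by (simp add: s'_def)
next
  case True
  define t where "t = tot s"
  have nK: "\<not> active s K" using inv by (simp add: bwa_inv_def active_def)
  define j0 where "j0 = (LEAST j. \<not> active s j)"
  have j0: "\<not> active s j0" unfolding j0_def by (rule LeastI[of _ K]) (rule nK)
  have j0K: "j0 \<le> K" unfolding j0_def by (rule Least_le) (rule nK)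
  have j0pos: "0 < j0" using True j0 by (cases j0) auto
  define s0 where "s0 = s\<lparr>Ba := (Ba s)(1 := Val v)\<rparr>"
  have act0: "\<And>k. active s0 k = active s k" by (simp add: s0_def active_def)
  have g0: "\<And>k. good s0 k = good s k" by (simp add: s0_def good_def)
  have q1: "\<forall>k\<ge>0. active s0 k \<longrightarrow> good s0 k" using inv act0 g0 by (auto simp: bwa_inv_def)
  have q2: "active s0 0" using True act0 by simp
  have "seg_list (Ba s0) 0 = [Val v]" by (simp add: s0_def seg_list_def numeral_2_eq_2)
  then have q3: "2^0 < 2 * nvoid (seg_list (Ba s0) 0)" by (simp add: nvoid_def)
  obtain j where j: "0 < j" "\<not> active s0 j" "\<forall>k. 0 \<le> k \<and> k < j \<longrightarrow> active s0 k"
      "\<forall>k>j. Vo (merge_op K 0 s0) k = Vo s0 k \<and> seg_list (Wa (merge_op K 0 s0)) k = seg_list (Wa s0) k"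
      "good (merge_op K 0 s0) j"
    using merge_ok[OF q1 q2 q3 j0pos _ , of K] j0K j0 act0 by auto
  define m where "m = merge_op K 0 s0"
  have e: "insert_op K v s = m\<lparr>tot := tot s + 1\<rparr>"
    using True by (simp add: insert_op_def m_def s0_def)
  have tm: "tot m = tot s" by (simp add: m_def merge_tot s0_def)
  have b1: "\<forall>k<j. odd (tot s div 2^k)" using j(3) act0 by (simp add: active_def)
  have b2: "even (tot s div 2^j)" using j(2) act0 by (simp add: active_def)
  have act: "\<And>k. active (insert_op K v s) k \<longleftrightarrow> (k = j \<or> (j < k \<and> active s k))"
    using succ_bits[OF b1 b2] unfolding e by (simp add: active_def)
  have "good (insert_op K v s) k" if "active (insert_op K v s) k" for k
  proof (cases "k = j")
    case True then show ?thesis using j(5) unfolding e m_def by simp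
  next
    case False
    then have k: "j < k" "active s k" using act that by auto
    then have "good s k" using inv by (auto simp: bwa_inv_def)
    then show ?thesis using j(4) k g0 unfolding e m_def by (simp add: good_def)
  qed
  moreover have "tot (insert_op K v s) < 2^K" using lt e by simp
  ultimately show ?thesis unfolding bwa_inv_def by blast
qed


lemma void_props:
  fixes s :: "'a::linorder bwa"
  assumes "p \<in> seg i" "Wa s p = Val v" "good s i"
  shows "tot (void_at s p i) = tot s"
    "\<And>k. k \<noteq> i \<Longrightarrow> Vo (void_at s p i) k = Vo s k \<and> seg_list (Wa (void_at s p i)) k = seg_list (Wa s) k"
    "Vo (void_at s p i) i = nvoid (seg_list (Wa (void_at s p i)) i)"
    "Vo (void_at s p i) i + 1 = Vo s i"
proof -
  show "tot (void_at s p i) = tot s" by (simp add: void_at_def)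
  show "\<And>k. k \<noteq> i \<Longrightarrow> Vo (void_at s p i) k = Vo s k \<and> seg_list (Wa (void_at s p i)) k = seg_list (Wa s) k"
    using seg_upd_other[OF assms(1)] by (simp add: void_at_def)
  have pos: "1 \<le> Vo s i" using assms(3) by (simp add: good_def)
  show "Vo (void_at s p i) i + 1 = Vo s i" using pos by (simp add: void_at_def)
  show "Vo (void_at s p i) i = nvoid (seg_list (Wa (void_at s p i)) i)"
    using nvoid_void[of p i "Wa s" v "key (Wa s p)", OF assms(1,2)] assms(3) by (simp add: void_at_def good_def)
qed

lemma demote_props:
  fixes s1 :: "'a::linorder bwa"
  assumes i: "i = Suc m" and ai: "active s1 i" and vi: "Vo s1 i = nvoid (seg_list (Wa s1) i)"
    and half: "2 * Vo s1 i = 2^i" and gk: "\<forall>k. k \<noteq> i \<longrightarrow> active s1 k \<longrightarrow> good s1 k"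
  defines "d \<equiv> demote i s1"
  shows "\<not> active s1 m \<Longrightarrow> (\<forall>k. active d k \<longleftrightarrow> (k = m \<or> (k \<noteq> i \<and> active s1 k)))
           \<and> Vo d m = nvoid (seg_list (Wa d) m) \<and> nvoid (seg_list (Wa d) m) = 2^m
           \<and> (\<forall>k. k \<noteq> m \<and> k \<noteq> i \<longrightarrow> Vo d k = Vo s1 k \<and> seg_list (Wa d) k = seg_list (Wa s1) k)
           \<and> tot d \<le> tot s1"
    and "active s1 m \<Longrightarrow> (\<forall>k. active d k \<longleftrightarrow> (k \<noteq> m \<and> active s1 k))
           \<and> Vo d i = nvoid (seg_list (Wa d) i) \<and> 3 * 2^i < 4 * nvoid (seg_list (Wa d) i)
           \<and> (\<forall>k. k \<noteq> m \<and> k \<noteq> i \<longrightarrow> Vo d k = Vo s1 k \<and> seg_list (Wa d) k = seg_list (Wa s1) k)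
           \<and> tot d \<le> tot s1"
proof -
  define ys where "ys = filter (\<lambda>e. \<not> is_void e) (seg_list (Wa s1) i)"
  have ly: "length ys = 2^m" using vi half i by (simp add: ys_def nvoid_def)
  have ny: "nvoid ys = 2^m" using ly by (simp add: ys_def nvoid_filter)
  have mi: "m \<noteq> i" using i by simp
  have oi: "odd (tot s1 div 2^i)" using ai by (simp add: active_def)
  {
    assume na: "\<not> active s1 m"
    have dd: "d = s1\<lparr>Wa := write_seg (Wa s1) m ys,
              Vo := ((Vo s1)(i := 0))(m := length ys),
              tot := tot s1 - 2^i + 2^m\<rparr>"
      using na i by (simp add: d_def demote_def ys_def Let_def)
    have ev: "even ((tot s1 - 2^i) div 2^m)" using clear_bit_nat[OF oi, of m] na mi
      by (simp add: active_def)
    have "\<forall>k. active d k \<longleftrightarrow> (k = m \<or> (k \<noteq> i \<and> active s1 k))"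
      using set_bit_nat[OF ev] clear_bit_nat[OF oi] by (simp add: dd active_def)
    moreover have "seg_list (Wa d) m = ys" using seg_write_same[OF ly] by (simp add: dd)
    moreover have "\<forall>k. k \<noteq> m \<and> k \<noteq> i \<longrightarrow> Vo d k = Vo s1 k \<and> seg_list (Wa d) k = seg_list (Wa s1) k"
      using seg_write_other[of _ m ys] ly by (simp add: dd)
    moreover have "tot d \<le> tot s1" using ge_if_odd[OF oi] i by (simp add: dd)
    ultimately show "(\<forall>k. active d k \<longleftrightarrow> (k = m \<or> (k \<noteq> i \<and> active s1 k)))
           \<and> Vo d m = nvoid (seg_list (Wa d) m) \<and> nvoid (seg_list (Wa d) m) = 2^m
           \<and> (\<forall>k. k \<noteq> m \<and> k \<noteq> i \<longrightarrow> Vo d k = Vo s1 k \<and> seg_list (Wa d) k = seg_list (Wa s1) k)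
           \<and> tot d \<le> tot s1"
      using ny ly mi by (simp add: dd)
  }
  {
    assume aa: "active s1 m"
    define B' where "B' = write_seg (Ba s1) m ys"
    define xs where "xs = merge_lists (seg_list (Wa s1) m) (seg_list B' m)"
    have dd: "d = s1\<lparr>Ba := B', Wa := write_seg (Wa s1) i xs,
            Vo := ((Vo s1)(m := 0))(i := nvoid xs),
            tot := tot s1 - 2^m\<rparr>"
      using aa i by (simp add: d_def demote_def ys_def B'_def xs_def Let_def)
    have sb: "seg_list B' m = ys" using seg_write_same[OF ly] by (simp add: B'_def)
    have lx: "length xs = 2^i" using sb ly i by (simp add: xs_def)
    have gm: "good s1 m" using gk aa mi by simp
    have nx: "nvoid xs = Vo s1 m + 2^m" using gm sb ny by (simp add: xs_def nvoid_merge good_def)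
    have om: "odd (tot s1 div 2^m)" using aa by (simp add: active_def)
    have "\<forall>k. active d k \<longleftrightarrow> (k \<noteq> m \<and> active s1 k)"
      using clear_bit_nat[OF om] by (simp add: dd active_def)
    moreover have "seg_list (Wa d) i = xs" using seg_write_same[OF lx] by (simp add: dd)
    moreover have "3 * 2^i < 4 * nvoid xs" using nx gm i by (simp add: good_def)
    moreover have "\<forall>k. k \<noteq> m \<and> k \<noteq> i \<longrightarrow> Vo d k = Vo s1 k \<and> seg_list (Wa d) k = seg_list (Wa s1) k"
      using seg_write_other[of _ i xs] lx by (simp add: dd)
    moreover have "tot d \<le> tot s1" by (simp add: dd)
    ultimately show "(\<forall>k. active d k \<longleftrightarrow> (k \<noteq> m \<and> active s1 k))
           \<and> Vo d i = nvoid (seg_list (Wa d) i) \<and> 3 * 2^i < 4 * nvoid (seg_list (Wa d) i)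
           \<and> (\<forall>k. k \<noteq> m \<and> k \<noteq> i \<longrightarrow> Vo d k = Vo s1 k \<and> seg_list (Wa d) k = seg_list (Wa s1) k)
           \<and> tot d \<le> tot s1"
      by (simp add: dd)
  }
qed


lemma good_eq:
  assumes "Vo s' k = Vo s k" "seg_list (Wa s') k = seg_list (Wa s) k"
  shows "good s' k = good s k"
  using assms by (simp add: good_def)

lemma void_setup:
  fixes s :: "'a::linorder bwa"
  assumes inv: "bwa_inv K s" and a: "active s i" "p \<in> seg i" "Wa s p = Val v"
  shows "\<And>k. active (void_at s p i) k = active s k"
    "\<forall>k. k \<noteq> i \<longrightarrow> active (void_at s p i) k \<longrightarrow> good (void_at s p i) k"
    "Vo (void_at s p i) i = nvoid (seg_list (Wa (void_at s p i)) i)"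
    "2^i < 2 * (Vo (void_at s p i) i + 1)"
    "tot (void_at s p i) = tot s"
proof -
  have gi: "good s i" using inv a by (simp add: bwa_inv_def)
  note vp = void_props[OF a(2,3) gi]
  show act: "\<And>k. active (void_at s p i) k = active s k" using vp(1) by (simp add: active_def)
  show "\<forall>k. k \<noteq> i \<longrightarrow> active (void_at s p i) k \<longrightarrow> good (void_at s p i) k"
    using vp(2) act inv good_eq by (metis bwa_inv_def)
  show "Vo (void_at s p i) i = nvoid (seg_list (Wa (void_at s p i)) i)" by (rule vp(3))
  show "2^i < 2 * (Vo (void_at s p i) i + 1)" using vp(4) gi by (simp add: good_def)
  show "tot (void_at s p i) = tot s" by (rule vp(1))
qed

lemma del_inv:
  fixes s :: "'a::linorder bwa"
  assumes inv: "bwa_inv K s" and st: "delete_step K s v s'"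
  shows "bwa_inv K s'"
proof -
  {
    fix i p assume a: "active s i" "p \<in> seg i" "Wa s p = Val v" and s': "s' = delete_at s p i"
    define s1 where "s1 = void_at s p i"
    note vs = void_setup[OF inv a, folded s1_def]
    have tK: "tot s1 < 2^K" using vs(5) inv by (simp add: bwa_inv_def)
    have "bwa_inv K s'"
    proof (cases "2 * Vo s1 i \<le> 2^i")
      case False
      then have "s' = s1" using s' by (simp add: delete_at_def s1_def Let_def)
      moreover have "good s1 i" using False vs(3) by (simp add: good_def)
      ultimately show ?thesis using vs(1,2) a(1) tK unfolding bwa_inv_def by (metis)
    next
      case True
      then have sd: "s' = demote i s1" using s' by (simp add: delete_at_def s1_def Let_def)
      show ?thesis
      proof (cases i)
        case 0
        have d: "demote i s1 = s1\<lparr>tot := tot s1 - 1, Vo := (Vo s1)(0 := 0)\<rparr>"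
          using 0 by (simp add: demote_def)
        have oi: "odd (tot s1 div 2^0)" using vs(5) a(1) 0 by (simp add: active_def)
        have "\<forall>k. active s' k \<longleftrightarrow> (k \<noteq> 0 \<and> active s1 k)"
          using clear_bit_nat[OF oi] by (simp add: sd d active_def)
        moreover have "\<And>k. k \<noteq> 0 \<Longrightarrow> good s' k = good s1 k" by (simp add: sd d good_def)
        moreover have "tot s' < 2^K" using tK by (simp add: sd d)
        ultimately show ?thesis using vs(2) 0 unfolding bwa_inv_def by simp
      next
        case (Suc m)
        have half: "2 * Vo s1 i = 2^i" using True vs(4) Suc by simp
        have ai: "active s1 i" using vs(1) a(1) by simp
        note dp = demote_props[OF Suc ai vs(3) half vs(2), folded sd]
        show ?thesis
        proof (cases "active s1 m")
          case False
          note r = dp(1)[OF False]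
          have "good s' k" if actk: "active s' k" for k
          proof -
            have ra: "active s' k \<longleftrightarrow> (k = m \<or> (k \<noteq> i \<and> active s1 k))" using r by (elim conjE allE)
            consider "k = m" | "k \<noteq> m" "k \<noteq> i" "active s1 k" using ra actk by blast
            then show ?thesis
            proof cases
              case 1 then show ?thesis using r by (simp add: good_def)
            next
              case 2
              have "k \<noteq> m \<and> k \<noteq> i" using 2 by simp
              then have e1: "Vo s' k = Vo s1 k" "seg_list (Wa s') k = seg_list (Wa s1) k" using r by blast+
              have "good s1 k" using vs(2) 2 by blast
              then show ?thesis using good_eq[OF e1] by simp
            qed
          qed
          moreover have "tot s' < 2^K" using r tK by linarith
          ultimately show ?thesis unfolding bwa_inv_def by blast
        next
          case True
          note r = dp(2)[OF True]
          have "good s' k" if actk: "active s' k" for k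
          proof -
            have ra: "active s' k \<longleftrightarrow> (k \<noteq> m \<and> active s1 k)" using r by (elim conjE allE)
            have "m \<noteq> i" using Suc by simp
            then consider "k = i" | "k \<noteq> m" "k \<noteq> i" "active s1 k" using ra actk by blast
            then show ?thesis
            proof cases
              case 1 then show ?thesis using r by (simp add: good_def)
            next
              case 2
              have "k \<noteq> m \<and> k \<noteq> i" using 2 by simp
              then have e1: "Vo s' k = Vo s1 k" "seg_list (Wa s') k = seg_list (Wa s1) k" using r by blast+
              have "good s1 k" using vs(2) 2 by blast
              then show ?thesis using good_eq[OF e1] by simp
            qed
          qed
          moreover have "tot s' < 2^K" using r tK by linarith
          ultimately show ?thesis unfolding bwa_inv_def by blast
        qed
      qed
    qed
  }
  note X = this
  show ?thesis using st inv X unfolding delete_step_def by blast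
qed

lemma reach_inv: "reachable K s \<Longrightarrow> bwa_inv K s"
proof (induction rule: reachable.induct)
  case (init W B) then show ?case by (simp add: bwa_inv_def active_def)
next
  case (ins s v) then show ?case using ins_inv by blast
next
  case (del s v s') then show ?case using del_inv by blast
qed


theorem mainTheorem3:
  fixes K i p :: nat and v :: "'a::linorder" and s :: "'a bwa"
  assumes "reachable K s"
    and "i < K" and "active s i" and "p \<in> seg i" and "Wa s p = Val v"
    and "1 \<le> i"
    and "2 * Vo (void_at s p i) i \<le> 2^i"
  shows "(\<not> active (void_at s p i) (i - 1) \<longrightarrow>
            active (demote i (void_at s p i)) (i - 1) \<and>
            occ_rate (demote i (void_at s p i)) (i - 1) = 1)
       \<and> (active (void_at s p i) (i - 1) \<longrightarrow>
            active (demote i (void_at s p i)) i \<and>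
            occ_rate (demote i (void_at s p i)) i > 3 / 4)"
proof -
  have inv: "bwa_inv K s" using assms(1) by (rule reach_inv)
  define s1 where "s1 = void_at s p i"
  note vs = void_setup[OF inv assms(3,4,5), folded s1_def]
  obtain m where im: "i = Suc m" using assms(6) by (cases i) auto
  have half: "2 * Vo s1 i = 2^i" using assms(7) vs(4) im unfolding s1_def[symmetric] by simp
  have ai: "active s1 i" using vs(1) assms(3) by simp
  note dp = demote_props[OF im ai vs(3) half vs(2)]
  have m1: "i - 1 = m" using im by simp
  define d where "d = demote i s1"
  have P1: "active d m \<and> occ_rate d m = 1" if na: "\<not> active s1 m"
  proof -
    note r = dp(1)[OF na, folded d_def]
    have "active d m" using r by blast
    moreover have "nvoid (seg_list (Wa d) m) = 2^m" using r by blast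
    then have "occ_rate d m = 1" by (simp add: occ_nvoid)
    ultimately show ?thesis by blast
  qed
  have P2: "active d i \<and> occ_rate d i > 3/4" if aa: "active s1 m"
  proof -
    note r = dp(2)[OF aa, folded d_def]
    have "active d i" using r ai im by simp
    moreover have nn: "3 * 2^i < 4 * nvoid (seg_list (Wa d) i)" using r by blast
    have "real (3 * 2^i) < real (4 * nvoid (seg_list (Wa d) i))" using nn by (simp only: of_nat_less_iff)
    then have "(3::real) * 2^i < 4 * real (nvoid (seg_list (Wa d) i))" by simp
    then have "occ_rate d i > 3/4" by (simp add: occ_nvoid divide_simps)
    ultimately show ?thesis by blast
  qed
  show ?thesis using P1 P2 unfolding m1 d_def s1_def by blast
qed

end
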